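(* There exist a graph $H$ and a positive semidefinite $0$-regular kernel $W$ such that $t(H,W)<0$.
   Context: Let $(\Omega,\mu)$ be an atomless standard probability space. A kernel is a bounded symmetric measurable $W:\Omega\times\Omega\to\mathbb R$. For a graph $H$, $t(H,W)=\int_{\Omega^{V(H)}}\prod_{uv\in E(H)}W(x_u,x_v)\prod_{v\in V(H)}d\mu(x_v)$. A kernel is $0$-regular if $\int_\Omega W(x,y)\,dy=0$ for a.e. $x$, and positive semidefinite if $\iint f(x)W(x,y)f(y)\,dx\,dy\ge0$ for every bounded measurable $f:\Omega\to\mathbb R$. *)

theory Defs
  imports "HOL-Probability.Probability"
begin

definition Omega :: "real measure" where
  "Omega = restrict_space lborel {0..1}"

definition is_kernel :: "'a measure \<Rightarrow> ('a \<Rightarrow> 'a \<Rightarrow> real) \<Rightarrow> bool" where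
  "is_kernel M W \<longleftrightarrow>
     (\<lambda>(x,y). W x y) \<in> borel_measurable (M \<Otimes>\<^sub>M M) \<and>
     (\<exists>C. \<forall>x\<in>space M. \<forall>y\<in>space M. \<bar>W x y\<bar> \<le> C) \<and>
     (\<forall>x\<in>space M. \<forall>y\<in>space M. W x y = W y x)"

definition zero_regular :: "'a measure \<Rightarrow> ('a \<Rightarrow> 'a \<Rightarrow> real) \<Rightarrow> bool" where
  "zero_regular M W \<longleftrightarrow> (AE x in M. (\<integral>y. W x y \<partial>M) = 0)"

definition psd_kernel :: "'a measure \<Rightarrow> ('a \<Rightarrow> 'a \<Rightarrow> real) \<Rightarrow> bool" where
  "psd_kernel M W \<longleftrightarrow>
     (\<forall>f. f \<in> borel_measurable M \<longrightarrow> (\<exists>C. \<forall>x\<in>space M. \<bar>f x\<bar> \<le> C) \<longrightarrow>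
        (\<integral>x. (\<integral>y. f x * W x y * f y \<partial>M) \<partial>M) \<ge> 0)"

definition simple_graph :: "nat \<Rightarrow> (nat \<times> nat) set \<Rightarrow> bool" where
  "simple_graph n E \<longleftrightarrow> E \<subseteq> {(u,v). u < v \<and> v < n}"

definition hom_density :: "nat \<Rightarrow> (nat \<times> nat) set \<Rightarrow> 'a measure \<Rightarrow> ('a \<Rightarrow> 'a \<Rightarrow> real) \<Rightarrow> real" where
  "hom_density n E M W =
     (\<integral>x. (\<Prod>(u,v)\<in>E. W (x u) (x v)) \<partial>(PiM {..<n} (\<lambda>_. M)))"

end

theory Submission
  imports Defs
begin

definition wf :: "real \<Rightarrow> real" where
  "wf x = (if x < 1/9 then 4 else if x < 4/9 then -3 else 1)"

lemma wf_meas[measurable]: "wf \<in> borel_measurable borel"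
  unfolding wf_def by measurable

lemma wf_meas_Omega[measurable]: "wf \<in> borel_measurable Omega"
  unfolding Omega_def by (rule measurable_restrict_space1) simp

lemma wf_pow_int: "integral\<^sup>L Omega (\<lambda>x. wf x ^ k) = 4^k/9 + (-3)^k/3 + 5/9"
proof -
  have "integral\<^sup>L Omega (\<lambda>x. wf x ^ k) = integral\<^sup>L lborel (\<lambda>x. indicator {0..1} x *\<^sub>R wf x ^ k)"
    unfolding Omega_def by (rule integral_restrict_space) simp
  also have "(\<lambda>x. indicator {0..1} x *\<^sub>R wf x ^ k) =
     (\<lambda>x. 4^k * indicator {0..<1/9} x + ((-3)^k * indicator {1/9..<4/9} x + indicator {4/9..1::real} x))"
    by (rule ext) (auto simp: wf_def indicator_def)
  also have "integral\<^sup>L lborel \<dots> = 4^k * (1/9) + ((-3)^k * (4/9 - 1/9) + (1 - 4/9))"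
  proof -
    have i1: "integrable lborel (\<lambda>x. 4^k * indicator {0..<1/9::real} x :: real)" by auto
    have i2: "integrable lborel (\<lambda>x. (-3)^k * indicator {1/9..<4/9::real} x :: real)" by auto
    have i3: "integrable lborel (\<lambda>x. indicator {4/9..1::real} x :: real)" by auto
    show ?thesis
      by (simp add: Bochner_Integration.integral_add[OF i1 Bochner_Integration.integrable_add[OF i2 i3]] Bochner_Integration.integral_add[OF i2 i3])
  qed
  finally show ?thesis by simp
qed


lemma Omega_prob: "prob_space Omega"
  unfolding Omega_def by (rule prob_space_restrict_space) auto

lemma wf_bound: "\<bar>wf x\<bar> \<le> 4"
  by (simp add: wf_def)

lemma wf_pow_integrable: "integrable Omega (\<lambda>x. wf x ^ k)"
proof -
  interpret prob_space Omega by (rule Omega_prob)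
  show ?thesis
  proof (rule integrable_const_bound[where B="4^k"])
    show "AE x in Omega. norm (wf x ^ k) \<le> 4^k"
      by (intro AE_I2) (metis norm_power real_norm_def abs_ge_zero power_mono wf_bound)
  qed simp
qed

theorem proposition5p2:
  shows "\<exists>n E W. simple_graph n E \<and> is_kernel Omega W \<and> psd_kernel Omega W \<and>
           zero_regular Omega W \<and> hom_density n E Omega W < 0"
proof -
  define E :: "(nat \<times> nat) set" where
    "E = {(0,1),(0,2),(0,3),(0,4),(0,5),(1,2),(1,3),(4,5)}"
  define W where "W = (\<lambda>x y. wf x * wf y)"
  define dg :: "nat \<Rightarrow> nat" where "dg i = (if i = 0 then 5 else if i = 1 then 3 else 2)" for i
  interpret prob_space Omega by (rule Omega_prob)
  have m1: "integral\<^sup>L Omega wf = 0"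
    using wf_pow_int[of 1] by simp
  have sg: "simple_graph 6 E" unfolding simple_graph_def E_def by auto
  have ker: "is_kernel Omega W"
    unfolding is_kernel_def W_def
  proof (intro conjI)
    show "(\<lambda>(x, y). wf x * wf y) \<in> borel_measurable (Omega \<Otimes>\<^sub>M Omega)" by measurable
    show "\<exists>C. \<forall>x\<in>space Omega. \<forall>y\<in>space Omega. \<bar>wf x * wf y\<bar> \<le> C"
    proof (rule exI[of _ 16], intro ballI)
      fix x y show "\<bar>wf x * wf y\<bar> \<le> 16"
        using mult_mono[OF wf_bound[of x] wf_bound[of y]] by (simp add: abs_mult)
    qed
    show "\<forall>x\<in>space Omega. \<forall>y\<in>space Omega. wf x * wf y = wf y * wf x" by simp
  qed
  have psd: "psd_kernel Omega W"
    unfolding psd_kernel_def W_def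
  proof (intro allI impI)
    fix f :: "real \<Rightarrow> real"
    define C where "C = (\<integral>y. wf y * f y \<partial>Omega)"
    have "(\<integral>y. f x * (wf x * wf y) * f y \<partial>Omega) = (f x * wf x) * C" for x
      unfolding C_def
      by (subst integral_mult_right_zero[symmetric]) (simp add: algebra_simps)
    hence "(\<integral>x. (\<integral>y. f x * (wf x * wf y) * f y \<partial>Omega) \<partial>Omega) = (\<integral>x. (f x * wf x) * C \<partial>Omega)"
      by simp
    also have "\<dots> = C * C"
      unfolding C_def by (simp add: integral_mult_left_zero mult.commute)
    finally show "0 \<le> (\<integral>x. (\<integral>y. f x * (wf x * wf y) * f y \<partial>Omega) \<partial>Omega)" by simp
  qed
  have zr: "zero_regular Omega W"
    unfolding zero_regular_def W_def
    by (intro AE_I2) (simp add: m1)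
  have prodeq: "(\<Prod>(u,v)\<in>E. W (x u) (x v)) = (\<Prod>i\<in>{..<6}. wf (x i) ^ dg i)" for x :: "nat \<Rightarrow> real"
  proof -
    have "{..<6::nat} = {0,1,2,3,4,5}" by auto
    then show ?thesis
      unfolding E_def W_def dg_def
      by (simp add: power_numeral_reduce algebra_simps)
  qed
  interpret ps: product_sigma_finite "\<lambda>_. Omega"
    by (unfold_locales)
  have "hom_density 6 E Omega W = (\<integral>x. (\<Prod>i\<in>{..<6}. wf (x i) ^ dg i) \<partial>(PiM {..<6} (\<lambda>_. Omega)))"
    unfolding hom_density_def by (simp add: prodeq)
  also have "\<dots> = (\<Prod>i\<in>{..<6}. integral\<^sup>L Omega (\<lambda>t. wf t ^ dg i))"
    using ps.product_integral_prod[of "{..<6}" "\<lambda>i t. wf t ^ dg i"] wf_pow_integrable by simp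
  also have "\<dots> < 0"
  proof -
    have "{..<6::nat} = {0,1,2,3,4,5}" by auto
    then show ?thesis by (simp add: wf_pow_int dg_def)
  qed
  finally show ?thesis using sg ker psd zr by blast
qed

end
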